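(* Let $d\in\mathbb{N}$, $d\geq 1$. There is no $d$-dimensional freezing cellular automaton $F$ such that, for every $d$-dimensional freezing cellular automaton $G$ with von Neumann neighborhood $\mathrm{VN}_d$, $F$ simulates $G$ with context $C=\{\vec 0\}$ (for some slowdown $T>0$ and some rectangular block $B$).
   Context: A $d$-dimensional cellular automaton (CA) is $F=(d,Q,N,f)$ with $Q$ a finite state set, $N\subset\mathbb{Z}^d$ a finite neighborhood and $f:Q^N\to Q$; its global map on $Q^{\mathbb{Z}^d}$ is $F(c)_z=f(c|_{z+N})$. A CA is $\preceq$-freezing for a partial order $\preceq$ on $Q$ if $F(c)_z\preceq c_z$ for every configuration $c$ and cell $z$; it is freezing if it is $\preceq$-freezing for some partial order. The von Neumann neighborhood is $\mathrm{VN}_d=\{\vec 0,\pm e_1,\dots,\pm e_d\}$ where $e_1,\dots,e_d$ is the canonical basis. Simulation: let $F=(d,Q_F,N,f)$, $G=(d,Q_G,N',g)$, $T>0$, $B\subseteq\mathbb{Z}^d$ a rectangular block with size-vector $b\in\mathbb{Z}^d$, and $C\subset\mathbb{Z}^d$ finite with $\vec0\in C$. $F$ simulates $G$ with slowdown $T$, block $B$ and context $C$ if there is a map $\phi:Q_G^C\to Q_F^B$ such that the map $\bar\phi:Q_G^{\mathbb{Z}^d}\to Q_F^{\mathbb{Z}^d}$ defined by $\bar\phi(c)_{bz+r}=\phi(c|_{z+C})_r$ for $z\in\mathbb{Z}^d$, $r\in B$ (with $bz$ the componentwise product) is injective and satisfies $\bar\phi(G(c))=F^T(\bar\phi(c))$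 for all $c$. The simulation is called context-free when $C=\{\vec 0\}$. *)

theory Defs
  imports Main "HOL-Library.FuncSet"
begin

text \<open>Cells of the lattice Z^d are functions 'd \<Rightarrow> int for a finite index type 'd
  (so d = CARD('d) \<ge> 1).\<close>

definition vplus :: "('d \<Rightarrow> int) \<Rightarrow> ('d \<Rightarrow> int) \<Rightarrow> ('d \<Rightarrow> int)" where
  "vplus z n = (\<lambda>i. z i + n i)"

definition configs :: "'q set \<Rightarrow> (('d \<Rightarrow> int) \<Rightarrow> 'q) set" where
  "configs Q = {c. \<forall>z. c z \<in> Q}"

definition pattern :: "(('d \<Rightarrow> int) \<Rightarrow> 'q) \<Rightarrow> ('d \<Rightarrow> int) \<Rightarrow> ('d \<Rightarrow> int) set
    \<Rightarrow> (('d \<Rightarrow> int) \<Rightarrow> 'q)" where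
  "pattern c z N = (\<lambda>n. if n \<in> N then c (vplus z n) else undefined)"

definition global :: "('d \<Rightarrow> int) set \<Rightarrow> ((('d \<Rightarrow> int) \<Rightarrow> 'q) \<Rightarrow> 'q)
    \<Rightarrow> (('d \<Rightarrow> int) \<Rightarrow> 'q) \<Rightarrow> (('d \<Rightarrow> int) \<Rightarrow> 'q)" where
  "global N f c = (\<lambda>z. f (pattern c z N))"

definition is_CA :: "'q set \<Rightarrow> ('d \<Rightarrow> int) set \<Rightarrow> ((('d \<Rightarrow> int) \<Rightarrow> 'q) \<Rightarrow> 'q) \<Rightarrow> bool" where
  "is_CA Q N f \<longleftrightarrow> finite Q \<and> Q \<noteq> {} \<and> finite N \<and> (\<forall>p \<in> N \<rightarrow>\<^sub>E Q. f p \<in> Q)"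

definition freezing :: "'q set \<Rightarrow> ('d \<Rightarrow> int) set \<Rightarrow> ((('d \<Rightarrow> int) \<Rightarrow> 'q) \<Rightarrow> 'q) \<Rightarrow> bool" where
  "freezing Q N f \<longleftrightarrow> (\<exists>R. partial_order_on Q R \<and>
      (\<forall>c \<in> configs Q. \<forall>z. (global N f c z, c z) \<in> R))"

definition unitv :: "'d \<Rightarrow> ('d \<Rightarrow> int)" where
  "unitv i = (\<lambda>j. if j = i then 1 else 0)"

definition VN :: "('d::finite \<Rightarrow> int) set" where
  "VN = {\<lambda>_. 0} \<union> range unitv \<union> range (\<lambda>i. (\<lambda>j. - unitv i j))"

definition block :: "('d \<Rightarrow> int) \<Rightarrow> ('d \<Rightarrow> int) set" where
  "block b = {r. \<forall>i. 0 \<le> r i \<and> r i < b i}"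

text \<open>phibar(c)_(bz+r) = phi(c|_(z+C))_r, with z = x div b, r = x mod b componentwise\<close>
definition phibar :: "('d \<Rightarrow> int) \<Rightarrow> ('d \<Rightarrow> int) set
    \<Rightarrow> ((('d \<Rightarrow> int) \<Rightarrow> 'g) \<Rightarrow> (('d \<Rightarrow> int) \<Rightarrow> 'q))
    \<Rightarrow> (('d \<Rightarrow> int) \<Rightarrow> 'g) \<Rightarrow> (('d \<Rightarrow> int) \<Rightarrow> 'q)" where
  "phibar b C \<phi> c = (\<lambda>x. \<phi> (pattern c (\<lambda>i. x i div b i) C) (\<lambda>i. x i mod b i))"

definition simulates ::
  "'q set \<Rightarrow> ('d \<Rightarrow> int) set \<Rightarrow> ((('d \<Rightarrow> int) \<Rightarrow> 'q) \<Rightarrow> 'q) \<Rightarrow>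
   'g set \<Rightarrow> ('d \<Rightarrow> int) set \<Rightarrow> ((('d \<Rightarrow> int) \<Rightarrow> 'g) \<Rightarrow> 'g) \<Rightarrow>
   nat \<Rightarrow> ('d \<Rightarrow> int) \<Rightarrow> ('d \<Rightarrow> int) set \<Rightarrow>
   ((('d \<Rightarrow> int) \<Rightarrow> 'g) \<Rightarrow> (('d \<Rightarrow> int) \<Rightarrow> 'q)) \<Rightarrow> bool" where
  "simulates QF NF fF QG NG fG T b C \<phi> \<longleftrightarrow>
     T > 0 \<and> (\<forall>i. b i > 0) \<and> finite C \<and> (\<lambda>_. 0) \<in> C \<and>
     (\<forall>p \<in> C \<rightarrow>\<^sub>E QG. \<forall>r \<in> block b. \<phi> p r \<in> QF) \<and>
     inj_on (phibar b C \<phi>) (configs QG) \<and>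
     (\<forall>c \<in> configs QG. phibar b C \<phi> (global NG fG c) = (global NF fF ^^ T) (phibar b C \<phi> c))"

end

theory Submission
  imports Defs
begin

definition gnu :: "'d \<Rightarrow> ('d \<Rightarrow> int)" where "gnu i = (\<lambda>j. - unitv i j)"

definition fGr :: "(('d \<Rightarrow> int) \<Rightarrow> nat) \<Rightarrow> nat" where
  "fGr p = (if 4 \<le> p (\<lambda>_. 0) \<and> (\<exists>j. p (unitv j) = p (gnu j) \<and> p (unitv j) \<in> {1,2})
            then p (\<lambda>_. 0) - 1 else p (\<lambda>_. 0))"

definition cfg :: "nat \<Rightarrow> nat \<Rightarrow> nat \<Rightarrow> 'd \<Rightarrow> (('d \<Rightarrow> int) \<Rightarrow> nat)" where
  "cfg s a b i = (\<lambda>z. if z = (\<lambda>_. 0) then s else if z = unitv i then b else if z = gnu i then a else 0)"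

lemma unitv_ne0[simp]: "unitv i \<noteq> (\<lambda>_. 0)" "(\<lambda>_. 0) \<noteq> unitv i"
  by (metis unitv_def zero_neq_one)+
lemma gnu_ne0[simp]: "gnu i \<noteq> (\<lambda>_. 0)" "(\<lambda>_. 0) \<noteq> gnu i"
  by (metis gnu_def unitv_def neg_equal_0_iff_equal zero_neq_one)+
lemma unitv_ne_gnu[simp]: "unitv i \<noteq> gnu j" "gnu j \<noteq> unitv i"
proof -
  show "unitv i \<noteq> gnu j"
  proof
    assume "unitv i = gnu j"
    then have "unitv i i = gnu j i" by simp
    then show False by (auto simp: unitv_def gnu_def split: if_splits)
  qed
  then show "gnu j \<noteq> unitv i" by metis
qed
lemma unitv_inj[simp]: "unitv i = unitv j \<longleftrightarrow> i = j"
  by (metis unitv_def zero_neq_one)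
lemma gnu_inj[simp]: "gnu i = gnu j \<longleftrightarrow> i = j"
  by (metis gnu_def unitv_def neg_equal_iff_equal zero_neq_one)

lemma vplus0: "vplus z (\<lambda>_. 0) = z" by (simp add: vplus_def)
lemma vplus0': "vplus (\<lambda>_. 0) n = n" by (simp add: vplus_def)

lemma VN_mem: "(\<lambda>_. 0) \<in> (VN :: ('d::finite \<Rightarrow> int) set)" "unitv i \<in> VN" "gnu i \<in> VN"
  by (auto simp: VN_def gnu_def)

lemma VN_finite: "finite (VN :: ('d::finite \<Rightarrow> int) set)"
  by (simp add: VN_def)

lemma global_cfg:
  fixes i :: "'d::finite"
  assumes "a \<in> {1,2}" "b \<in> {1,2}" "4 \<le> s"
  shows "global VN fGr (cfg s a b i) = cfg (if a = b then s - 1 else s) a b i"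
proof
  fix z :: "'d \<Rightarrow> int"
  have pz: "pattern (cfg s a b i) z VN (\<lambda>_. 0) = cfg s a b i z"
    by (simp add: pattern_def vplus0 VN_mem(1))
  show "global VN fGr (cfg s a b i) z = cfg (if a = b then s - 1 else s) a b i z"
  proof (cases "z = (\<lambda>_. 0)")
    case True
    have pu: "pattern (cfg s a b i) z VN (unitv j) = (if j = i then b else 0)" for j
      using VN_mem True by (auto simp: pattern_def vplus0' cfg_def)
    have pg: "pattern (cfg s a b i) z VN (gnu j) = (if j = i then a else 0)" for j
      using VN_mem True by (auto simp: pattern_def vplus0' cfg_def)
    have ex: "(\<exists>j. pattern (cfg s a b i) z VN (unitv j) = pattern (cfg s a b i) z VN (gnu j)
        \<and> pattern (cfg s a b i) z VN (unitv j) \<in> {1,2}) = (a = b)"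
      unfolding pu pg using assms by auto
    show ?thesis using True assms unfolding global_def fGr_def pz ex
      by (simp add: cfg_def)
  next
    case False
    have "cfg s a b i z < 4" using False assms by (auto simp: cfg_def)
    then show ?thesis using False unfolding global_def fGr_def pz
      by (auto simp: cfg_def)
  qed
qed

lemma cfg_configs: "s \<le> M \<Longrightarrow> a \<le> M \<Longrightarrow> b \<le> M \<Longrightarrow> cfg s a b i \<in> configs {0..M}"
  by (auto simp: configs_def cfg_def)

lemma isCA_G: "is_CA {0..M} (VN :: ('d::finite \<Rightarrow> int) set) fGr"
  unfolding is_CA_def using VN_finite VN_mem
  by (auto simp: fGr_def PiE_def Pi_def)

lemma freezing_G: "freezing {0..M} (VN :: ('d::finite \<Rightarrow> int) set) fGr"
  unfolding freezing_def
proof (intro exI conjI ballI allI)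
  let ?R = "{(x,y). x \<in> {0..M} \<and> y \<in> {0..M} \<and> x \<le> y}"
  show "partial_order_on {0..M} ?R"
    by (auto simp: partial_order_on_def preorder_on_def refl_on_def trans_def antisym_def)
  fix c :: "('d \<Rightarrow> int) \<Rightarrow> nat" and z
  assume c: "c \<in> configs {0..M}"
  have pz: "pattern c z VN (\<lambda>_. 0) = c z"
    by (simp add: pattern_def vplus0 VN_mem(1))
  show "(global VN fGr c z, c z) \<in> ?R"
  proof -
    have "global VN fGr c z \<le> c z" by (simp add: global_def fGr_def pz)
    moreover have "c z \<le> M" using c by (auto simp: configs_def)
    ultimately show ?thesis by auto
  qed
qed

lemma phibar_eq: "phibar b {\<lambda>_. 0} \<phi> c x =
   \<phi> (\<lambda>n. if n = (\<lambda>_. 0) then c (\<lambda>i. x i div b i) else undefined) (\<lambda>i. x i mod b i)"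
proof -
  have "(\<lambda>n. if n \<in> {\<lambda>_. 0} then c (vplus (\<lambda>i. x i div b i) n) else undefined)
      = (\<lambda>n. if n = (\<lambda>_. 0) then c (\<lambda>i. x i div b i) else undefined)"
    by (rule ext) (simp add: vplus0)
  then show ?thesis by (simp add: phibar_def pattern_def)
qed

lemma phibar_local: "c (\<lambda>i. x i div b i) = c' (\<lambda>i. x i div b i) \<Longrightarrow>
    phibar b {\<lambda>_. 0} \<phi> c x = phibar b {\<lambda>_. 0} \<phi> c' x"
proof -
  assume h: "c (\<lambda>i. x i div b i) = c' (\<lambda>i. x i div b i)"
  show ?thesis unfolding phibar_eq h ..
qed

lemma phibar_configs:
  assumes "\<forall>i. b i > 0" "\<forall>p \<in> {\<lambda>_. 0} \<rightarrow>\<^sub>E QG. \<forall>r \<in> block b. \<phi> p r \<in> QF"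
    "c \<in> configs QG"
  shows "phibar b {\<lambda>_. 0} \<phi> c \<in> configs QF"
  unfolding configs_def
proof (intro CollectI allI)
  fix x
  have "(\<lambda>n. if n = (\<lambda>_. 0) then c (\<lambda>i. x i div b i) else undefined) \<in> {\<lambda>_. 0} \<rightarrow>\<^sub>E QG"
    using assms(3) by (auto simp: configs_def PiE_def extensional_def)
  moreover have "(\<lambda>i. x i mod b i) \<in> block b" using assms(1) by (simp add: block_def)
  ultimately show "phibar b {\<lambda>_. 0} \<phi> c x \<in> QF" unfolding phibar_eq using assms(2) by blast
qed

lemma global_configs:
  assumes "is_CA QF NF fF" "X \<in> configs QF"
  shows "global NF fF X \<in> configs QF"
proof -
  have "pattern X x NF \<in> NF \<rightarrow>\<^sub>E QF" for x
    using assms(2) by (auto simp: configs_def pattern_def PiE_def extensional_def)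
  then show ?thesis using assms(1) by (auto simp: is_CA_def configs_def global_def)
qed

lemma funpow_configs:
  assumes "is_CA QF NF fF" "X \<in> configs QF"
  shows "(global NF fF ^^ k) X \<in> configs QF"
  by (induction k) (auto simp: assms global_configs)

lemma funpow_le:
  assumes "is_CA QF NF fF" "partial_order_on QF R"
    "\<forall>c \<in> configs QF. \<forall>z. (global NF fF c z, c z) \<in> R" "X \<in> configs QF"
  shows "((global NF fF ^^ k) X x, X x) \<in> R"
proof (induction k)
  case 0
  have "X x \<in> QF" using assms(4) by (auto simp: configs_def)
  then show ?case using assms(2) by (auto simp: partial_order_on_def preorder_on_def refl_on_def)
next
  case (Suc k)
  have "(global NF fF ((global NF fF ^^ k) X) x, (global NF fF ^^ k) X x) \<in> R"
    using assms(3) funpow_configs[OF assms(1,4)] by blast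
  then show ?case using Suc assms(2) unfolding partial_order_on_def preorder_on_def trans_def
    by auto
qed

lemma fix_lemma:
  assumes "is_CA QF NF fF" "partial_order_on QF R"
    "\<forall>c \<in> configs QF. \<forall>z. (global NF fF c z, c z) \<in> R" "X \<in> configs QF"
    "T > 0" "(global NF fF ^^ T) X = X"
  shows "global NF fF X = X"
proof
  fix x
  have 1: "(global NF fF X x, X x) \<in> R" using assms(3,4) by blast
  have "T = Suc (T - 1)" using assms(5) by simp
  then have "(global NF fF ^^ T) X = (global NF fF ^^ (T - 1)) (global NF fF X)"
    by (metis funpow_Suc_right comp_apply)
  then have "X = (global NF fF ^^ (T - 1)) (global NF fF X)" using assms(6) by simp
  then have 2: "(X x, global NF fF X x) \<in> R"
    using funpow_le[OF assms(1,2,3) global_configs[OF assms(1,4)], of "T - 1" x] by simp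
  show "global NF fF X x = X x" using 1 2 assms(2) unfolding partial_order_on_def antisym_def by blast
qed

lemma finite_block: "finite (block (c :: 'd::finite \<Rightarrow> int))"
proof -
  have "block c = Pi\<^sub>E UNIV (\<lambda>i. {0..<c i})"
    by (auto simp: block_def PiE_UNIV_domain Pi_def)
  then show ?thesis by (simp add: finite_PiE)
qed

lemma div1: "(0::int) < b \<Longrightarrow> a div b = 1 \<Longrightarrow> b \<le> a"
proof -
  assume "0 < b" "a div b = 1"
  have "a = b * (a div b) + a mod b" by simp
  then have "a = b + a mod b" using \<open>a div b = 1\<close> by simp
  moreover have "0 \<le> a mod b" using \<open>0 < b\<close> by simp
  ultimately show "b \<le> a" by linarith
qed
lemma divm1: "(0::int) < b \<Longrightarrow> a div b = -1 \<Longrightarrow> a < 0"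
  using pos_imp_zdiv_neg_iff by fastforce


lemma funpow_fix: "f x = x \<Longrightarrow> (f ^^ n) x = x"
  by (induction n) auto

theorem theorem4:
  shows "\<not> (\<exists>(QF :: 'q set) (NF :: ('d::finite \<Rightarrow> int) set) fF. is_CA QF NF fF \<and> freezing QF NF fF \<and>
            (\<forall>(QG :: nat set) fG. is_CA QG (VN :: ('d \<Rightarrow> int) set) fG \<and> freezing QG VN fG \<longrightarrow>
               (\<exists>T b \<phi>. simulates QF NF fF QG VN fG T b {\<lambda>_. 0} \<phi>)))"
proof
  assume "\<exists>(QF :: 'q set) (NF :: ('d::finite \<Rightarrow> int) set) fF. is_CA QF NF fF \<and> freezing QF NF fF \<and>
            (\<forall>(QG :: nat set) fG. is_CA QG (VN :: ('d \<Rightarrow> int) set) fG \<and> freezing QG VN fG \<longrightarrow>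
               (\<exists>T b \<phi>. simulates QF NF fF QG VN fG T b {\<lambda>_. 0} \<phi>))"
  then obtain QF :: "'q set" and NF :: "('d::finite \<Rightarrow> int) set" and fF where
    caF: "is_CA QF NF fF" and frF: "freezing QF NF fF" and
    univ: "\<forall>(QG :: nat set) fG. is_CA QG (VN :: ('d \<Rightarrow> int) set) fG \<and> freezing QG VN fG \<longrightarrow>
               (\<exists>T b \<phi>. simulates QF NF fF QG VN fG T b {\<lambda>_. 0} \<phi>)"
    by blast
  from frF obtain R where po: "partial_order_on QF R"
    and dec: "\<forall>c\<in>configs QF. \<forall>z. (global NF fF c z, c z) \<in> R"
    unfolding freezing_def by blast
  define K :: int where "K = (\<Sum>n\<in>NF. \<Sum>j\<in>UNIV. \<bar>n j\<bar>)"
  define Bm where "Bm = card (block (\<lambda>_::'d. 2*K))"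
  define q where "q = card QF"
  define M :: nat where "M = q*Bm + 5"
  have M4: "4 \<le> M" by (simp add: M_def)
  obtain T b \<phi> where sim: "simulates QF NF fF {0..M} (VN :: ('d \<Rightarrow> int) set) fGr T b {\<lambda>_. 0} \<phi>"
    using univ isCA_G freezing_G by blast
  then have T0: "T > 0" and bpos: "\<forall>i. b i > 0"
    and phQ: "\<forall>p\<in>{\<lambda>_. 0} \<rightarrow>\<^sub>E {0..M}. \<forall>r\<in>block b. \<phi> p r \<in> QF"
    and inj: "inj_on (phibar b {\<lambda>_. 0} \<phi>) (configs {0..M})"
    and comm: "\<forall>c\<in>configs {0..M}. phibar b {\<lambda>_. 0} \<phi> (global VN fGr c)
                   = (global NF fF ^^ T) (phibar b {\<lambda>_. 0} \<phi> c)"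
    unfolding simulates_def by auto
  define Phi where "Phi = phibar b {\<lambda>_. 0} \<phi>"
  have finNF: "finite NF" using caF by (simp add: is_CA_def)
  have Kb: "\<bar>n j\<bar> \<le> K" if "n \<in> insert (\<lambda>_. 0) NF" for n j
  proof (cases "n \<in> NF")
    case True
    have "\<bar>n j\<bar> \<le> (\<Sum>j\<in>UNIV. \<bar>n j\<bar>)" by (rule member_le_sum) auto
    also have "\<dots> \<le> K" unfolding K_def using True finNF
      by (intro member_le_sum) (auto intro: sum_nonneg)
    finally show ?thesis .
  next
    case False
    then have "n = (\<lambda>_. 0)" using that by auto
    moreover have "0 \<le> K" unfolding K_def by (intro sum_nonneg) auto
    ultimately show ?thesis by simp
  qed
  have PhiQ: "Phi c \<in> configs QF" if "c \<in> configs {0..M}" for c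
    unfolding Phi_def using phibar_configs[OF bpos phQ that] .
  have bbound: "b i < 2*K" for i
  proof -
    let ?c11 = "cfg 4 1 1 i" and ?c12 = "cfg 4 1 2 i" and ?c21 = "cfg 4 2 1 i" and ?c3 = "cfg 3 1 1 i"
    have cs: "?c11 \<in> configs {0..M}" "?c12 \<in> configs {0..M}" "?c21 \<in> configs {0..M}" "?c3 \<in> configs {0..M}"
      using M4 by (auto intro!: cfg_configs)
    have g12: "global VN fGr ?c12 = ?c12" using global_cfg[of 1 2 4 i] by simp
    have g21: "global VN fGr ?c21 = ?c21" using global_cfg[of 2 1 4 i] by simp
    have g11: "global VN fGr ?c11 = ?c3" using global_cfg[of 1 1 4 i] by simp
    have "(global NF fF ^^ T) (Phi ?c12) = Phi ?c12" using comm cs(2) g12 unfolding Phi_def by metis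
    then have fix12: "global NF fF (Phi ?c12) = Phi ?c12"
      using fix_lemma[OF caF po dec PhiQ[OF cs(2)] T0] by blast
    have "(global NF fF ^^ T) (Phi ?c21) = Phi ?c21" using comm cs(3) g21 unfolding Phi_def by metis
    then have fix21: "global NF fF (Phi ?c21) = Phi ?c21"
      using fix_lemma[OF caF po dec PhiQ[OF cs(3)] T0] by blast
    have nfix: "global NF fF (Phi ?c11) \<noteq> Phi ?c11"
    proof
      assume h: "global NF fF (Phi ?c11) = Phi ?c11"
      have "(global NF fF ^^ T) (Phi ?c11) = Phi ?c11" using funpow_fix[of "global NF fF", OF h] .
      then have "Phi ?c3 = Phi ?c11" using comm cs(1) g11 unfolding Phi_def by metis
      then have "?c3 = ?c11" using inj cs(1,4) unfolding Phi_def inj_on_def by blast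
      then have "?c3 (\<lambda>_. 0) = ?c11 (\<lambda>_. 0)" by simp
      then show False by (simp add: cfg_def)
    qed
    then obtain x where hx: "global NF fF (Phi ?c11) x \<noteq> Phi ?c11 x" by auto
    have gen: "\<exists>n\<in>insert (\<lambda>_. 0) NF. (\<lambda>j. (x j + n j) div b j) = w"
      if cc: "c' \<in> configs {0..M}" and fixc: "global NF fF (Phi c') = Phi c'"
        and agr: "\<And>z. z \<noteq> w \<Longrightarrow> ?c11 z = c' z" for c' w
    proof (rule ccontr)
      assume nn: "\<not> ?thesis"
      have agree: "Phi ?c11 y = Phi c' y" if "(\<lambda>j. y j div b j) \<noteq> w" for y
        unfolding Phi_def using that agr by (intro phibar_local) auto
      have nn': "\<forall>n\<in>insert (\<lambda>_. 0) NF. (\<lambda>j. (x j + n j) div b j) \<noteq> w" using nn by simp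
      have "(\<lambda>j. x j div b j) \<noteq> w" using bspec[OF nn' insertI1] by simp
      then have "Phi ?c11 x = Phi c' x" by (intro agree) simp
      moreover have "pattern (Phi ?c11) x NF = pattern (Phi c') x NF"
      proof
        fix n
        show "pattern (Phi ?c11) x NF n = pattern (Phi c') x NF n"
        proof (cases "n \<in> NF")
          case True
          then have "(\<lambda>j. (x j + n j) div b j) \<noteq> w" using nn by simp
          then have "Phi ?c11 (vplus x n) = Phi c' (vplus x n)" by (intro agree) (simp add: vplus_def)
          then show ?thesis by (simp add: pattern_def)
        qed (simp add: pattern_def)
      qed
      ultimately have "global NF fF (Phi ?c11) x = Phi ?c11 x"
        using fixc by (metis global_def)
      with hx show False by simp
    qed
    have "\<exists>n\<in>insert (\<lambda>_. 0) NF. (\<lambda>j. (x j + n j) div b j) = unitv i"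
      by (rule gen[OF cs(2) fix12]) (simp add: cfg_def)
    then obtain n1 where n1: "n1 \<in> insert (\<lambda>_. 0) NF" "(\<lambda>j. (x j + n1 j) div b j) = unitv i"
      by (rule bexE)
    have "\<exists>n\<in>insert (\<lambda>_. 0) NF. (\<lambda>j. (x j + n j) div b j) = gnu i"
      by (rule gen[OF cs(3) fix21]) (simp add: cfg_def)
    then obtain n2 where n2: "n2 \<in> insert (\<lambda>_. 0) NF" "(\<lambda>j. (x j + n2 j) div b j) = gnu i"
      by (rule bexE)
    have "(x i + n1 i) div b i = 1" using fun_cong[OF n1(2), of i] by (simp add: unitv_def)
    then have a1: "b i \<le> x i + n1 i" using div1 bpos by blast
    have "(x i + n2 i) div b i = -1" using fun_cong[OF n2(2), of i] by (simp add: gnu_def unitv_def)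
    then have a2: "x i + n2 i < 0" using divm1 bpos by blast
    have "\<bar>n1 i\<bar> \<le> K" "\<bar>n2 i\<bar> \<le> K" using Kb n1(1) n2(1) by auto
    then show ?thesis using a1 a2 by linarith
  qed
  define i0 where "i0 = (undefined :: 'd)"
  define X where "X s = Phi (cfg s 1 1 i0)" for s
  define ht where "ht a = card {a'\<in>QF. (a', a) \<in> R}" for a
  define P where "P Y = (\<Sum>r\<in>block b. ht (Y r))" for Y :: "('d \<Rightarrow> int) \<Rightarrow> 'q"
  have fin: "finite QF" using caF by (simp add: is_CA_def)
  have htle: "ht a \<le> q" for a unfolding ht_def q_def using fin by (intro card_mono) auto
  have htlt: "ht a < ht a'" if "(a,a') \<in> R" "a \<noteq> a'" for a a'
  proof -
    have sub: "{x\<in>QF. (x,a)\<in>R} \<subseteq> {x\<in>QF. (x,a')\<in>R}"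
      using that(1) po unfolding partial_order_on_def preorder_on_def trans_def by blast
    have a'Q: "a' \<in> QF" using that(1) po unfolding partial_order_on_def preorder_on_def by blast
    have "(a',a') \<in> R" using a'Q po unfolding partial_order_on_def preorder_on_def refl_on_def by blast
    moreover have "(a',a) \<notin> R" using that po unfolding partial_order_on_def antisym_def by blast
    ultimately have "{x\<in>QF. (x,a)\<in>R} \<subset> {x\<in>QF. (x,a')\<in>R}" using sub a'Q by blast
    then show ?thesis unfolding ht_def using fin by (intro psubset_card_mono) auto
  qed
  have step: "P (X (s-1)) < P (X s)" if "5 \<le> s" "s \<le> M" for s
  proof -
    have cs: "cfg s 1 1 i0 \<in> configs {0..M}" "cfg (s-1) 1 1 i0 \<in> configs {0..M}"
      using that by (auto intro!: cfg_configs)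
    have g: "global VN fGr (cfg s 1 1 i0) = cfg (s-1) 1 1 i0" using global_cfg[of 1 1 s i0] that by simp
    have Xeq: "X (s-1) = (global NF fF ^^ T) (X s)" unfolding X_def Phi_def using comm cs(1) g by metis
    have le: "(X (s-1) y, X s y) \<in> R" for y
      unfolding Xeq using funpow_le[OF caF po dec PhiQ[OF cs(1)]] unfolding X_def by blast
    have ne: "X (s-1) \<noteq> X s"
    proof
      assume "X (s-1) = X s"
      then have "cfg (s-1) 1 1 i0 = cfg s 1 1 i0" using inj cs unfolding X_def Phi_def inj_on_def by blast
      then have "cfg (s-1) 1 1 i0 (\<lambda>_. 0) = cfg s 1 1 i0 (\<lambda>_. 0)" by simp
      then show False using that by (simp add: cfg_def)
    qed
    then obtain y where y: "X (s-1) y \<noteq> X s y" by auto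
    have y0: "(\<lambda>j. y j div b j) = (\<lambda>_. 0)"
    proof (rule ccontr)
      assume "(\<lambda>j. y j div b j) \<noteq> (\<lambda>_. 0)"
      then have "X (s-1) y = X s y" unfolding X_def Phi_def by (intro phibar_local) (auto simp: cfg_def)
      with y show False by simp
    qed
    have yB: "y \<in> block b"
      unfolding block_def
    proof (intro CollectI allI)
      fix j
      have "y j div b j = 0" using fun_cong[OF y0, of j] by simp
      then show "0 \<le> y j \<and> y j < b j" using zdiv_eq_0_iff[of "y j" "b j"] spec[OF bpos, of j] by auto
    qed
    show ?thesis unfolding P_def
    proof (rule sum_strict_mono_ex1)
      show "finite (block b)" by (rule finite_block)
      show "\<forall>r\<in>block b. ht (X (s - 1) r) \<le> ht (X s r)"
        using htlt le by (metis order.order_iff_strict)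
      show "\<exists>r\<in>block b. ht (X (s - 1) r) < ht (X s r)"
        using htlt le y yB by blast
    qed
  qed
  have ind: "4 + k \<le> M \<Longrightarrow> k \<le> P (X (4+k))" for k
  proof (induction k)
    case 0
    show ?case by simp
  next
    case (Suc k)
    then have "k \<le> P (X (4+k))" by simp
    moreover have "P (X (4 + Suc k - 1)) < P (X (4 + Suc k))" using step[of "4 + Suc k"] Suc.prems by simp
    ultimately show ?case by simp
  qed
  have "M - 4 \<le> P (X M)" using ind[of "M-4"] M4 by simp
  also have "P (X M) \<le> card (block b) * q"
    unfolding P_def using sum_bounded_above[of "block b" "\<lambda>r. ht (X M r)" q] htle by simp
  also have "\<dots> \<le> Bm * q"
  proof -
    have "block b \<subseteq> block (\<lambda>_::'d. 2*K)"
      using bbound by (auto simp: block_def intro: less_trans)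
    then have "card (block b) \<le> Bm" unfolding Bm_def by (intro card_mono finite_block)
    then show ?thesis by simp
  qed
  finally show False unfolding M_def by simp
qed

end
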